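(* Suppose $|\mathit{Obs}|>1$ and $m\ge1$. Then, over the class of all $m$-agent models, CTL*KΔ$_m$ is strictly more expressive than CTL*K$_m$: every CTL*K$_m$ formula is equivalent to some CTL*KΔ$_m$ formula, but there is a CTL*KΔ$_m$ formula that is not equivalent to any CTL*K$_m$ formula. Here two formulas $\varphi,\varphi'$ are equivalent if for every $m$-agent model $M$, $M\models\varphi$ iff $M\models\varphi'$.
   Context: Fix a countably infinite set $\mathit{AP}$ of atomic propositions, a finite nonempty set $\mathit{Obs}$ of observations, and a finite set of agents $\mathit{Ag}=\{a_1,\dots,a_m\}$. For a word $w$ we write $w_i$ for its letter at position $i$ (positions start at $0$), $w_{\le i}$ for its prefix ending at position $i$, $|w|$ for its length (finite words) and $\mathit{last}(w)$ for its last letter; $w\preceq w'$ means $w$ is a prefix of $w'$. Syntax of CTL*KΔ$_m$: history formulas $\varphi::=p\mid\neg\varphi\mid\varphi\wedge\varphi\mid\mathbf A\psi\mid\mathbf K_a\varphi\mid\Delta^{o}_a\varphi$ and path formulas $\psi::=\varphi\mid\neg\psi\mid\psi\wedge\psi\mid\mathbf X\psi\mid\psi\,\mathbf U\,\psi$, with $p\in\mathit{AP}$, $a\in\mathit{Ag}$, $o\in\mathit{Obs}$; formulas are history formulas. CTL*K$_m$ is the fragment of formulas containing no operator $\Delta^o_a$. A multiagent ($m$-agent) model is $M=(\mathit{AP}_f,S,T,V,\{\sim_o\}_{o\in\mathit{Obs}},s_\iota,\vec o_\iota)$ where $\mathit{AP}_f\subseteq\mathit{AP}$ is finite, $S$ is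 a finite set of states, $T\subseteq S\times S$ is left-total, $V:S\to2^{\mathit{AP}_f}$, each $\sim_o$ is an equivalence relation on $S$, $s_\iota\in S$, and $\vec o_\iota=(\vec o_{\iota,a})_{a\in\mathit{Ag}}\in\mathit{Obs}^{\mathit{Ag}}$ gives each agent an initial observation. Paths are infinite sequences of states $s_0s_1\dots$ with $s_iTs_{i+1}$ (starting anywhere); histories are finite nonempty prefixes of paths. An observation record is a finite word over $\mathit{Obs}\times\mathbb N$; $r_{=n}$ is the subword of $r$ consisting of the pairs with second component $n$. A record tuple is $\vec r=(\vec r_a)_{a\in\mathit{Ag}}$; $\vec r\cdot(o,n)_a$ is $\vec r$ with $\vec r_a$ replaced by $\vec r_a\cdot(o,n)$; $\vec\epsilon$ is the tuple of empty records. For agent $a$: $\mathit{ol}_a(\vec r,0)=\vec o_{\iota,a}\cdot o_1\cdots o_k$ if $(\vec r_a)_{=0}=(o_1,0)\cdots(o_k,0)$, and $\mathit{ol}_a(\vec r,n+1)=\mathit{last}(\mathit{ol}_a(\vec r,n))\cdot o_1\cdots o_k$ if $(\vec r_a)_{=n+1}=(o_1,n+1)\cdots(o_k,n+1)$. $h\approx^{\vec r}_a h'$ iff $|h|=|h'|$ and for all $i<|h|$ and all $o$ in $\mathit{ol}_a(\vec r,i)$, $h_i\sim_o h'_i$. Natural semantics: $h,\vec r\models p$ iff $p\in V(\mathit{last}(h))$; negation and conjunction as usual; $h,\vec r\models\mathbf A\psi$ iff for all paths $\pi$ with $h\preceq\pi$, $\pi,|h|-1,\vec r\models\psi$; $h,\vec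 r\models\mathbf K_a\varphi$ iff $h',\vec r\models\varphi$ for all histories $h'\approx^{\vec r}_a h$; $h,\vec r\models\Delta^o_a\varphi$ iff $h,\vec r\cdot(o,|h|-1)_a\models\varphi$; $\pi,n,\vec r\models\varphi$ iff $\pi_{\le n},\vec r\models\varphi$; negation and conjunction as usual; $\pi,n,\vec r\models\mathbf X\psi$ iff $\pi,n+1,\vec r\models\psi$; $\pi,n,\vec r\models\psi_1\mathbf U\psi_2$ iff there is $m'\ge n$ with $\pi,m',\vec r\models\psi_2$ and $\pi,j,\vec r\models\psi_1$ for all $n\le j<m'$. $M\models\varphi$ iff $s_\iota,\vec\epsilon\models\varphi$ ($s_\iota$ viewed as a one-state history). *)

theory Defs
  imports Main
begin

(* Agents: a type variable 'ag (class finite, automatically nonempty: m >= 1).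
   States of models are drawn from nat (every finite model is isomorphic to one of these). *)

datatype ('ag, 'o) hform =
    Prop nat
  | HNot "('ag, 'o) hform"
  | HAnd "('ag, 'o) hform" "('ag, 'o) hform"
  | Aall "('ag, 'o) pform"
  | Know 'ag "('ag, 'o) hform"
  | Delta 'o 'ag "('ag, 'o) hform"
and ('ag, 'o) pform =
    PH "('ag, 'o) hform"
  | PNot "('ag, 'o) pform"
  | PAnd "('ag, 'o) pform" "('ag, 'o) pform"
  | Next "('ag, 'o) pform"
  | Until "('ag, 'o) pform" "('ag, 'o) pform"

record ('ag, 'o) model =
  APf :: "nat set"
  St :: "nat set"
  Tr :: "(nat \<times> nat) set"
  Val :: "nat \<Rightarrow> nat set"
  Sim :: "'o \<Rightarrow> (nat \<times> nat) set"
  sinit :: nat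
  oinit :: "'ag \<Rightarrow> 'o"

definition wf_model :: "('ag, 'o) model \<Rightarrow> bool" where
  "wf_model M \<longleftrightarrow>
     finite (APf M) \<and> finite (St M) \<and> Tr M \<subseteq> St M \<times> St M \<and>
     (\<forall>s\<in>St M. \<exists>t. (s, t) \<in> Tr M) \<and>
     (\<forall>s\<in>St M. Val M s \<subseteq> APf M) \<and>
     (\<forall>ob. equiv (St M) (Sim M ob)) \<and> sinit M \<in> St M"

definition is_path :: "('ag, 'o) model \<Rightarrow> (nat \<Rightarrow> nat) \<Rightarrow> bool" where
  "is_path M \<pi> \<longleftrightarrow> (\<forall>i. \<pi> i \<in> St M \<and> (\<pi> i, \<pi> (Suc i)) \<in> Tr M)"

definition is_hist :: "('ag, 'o) model \<Rightarrow> nat list \<Rightarrow> bool" where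
  "is_hist M h \<longleftrightarrow> h \<noteq> [] \<and> (\<exists>\<pi>. is_path M \<pi> \<and> (\<forall>i<length h. h ! i = \<pi> i))"

definition pprefix :: "(nat \<Rightarrow> nat) \<Rightarrow> nat \<Rightarrow> nat list" where
  "pprefix \<pi> n = map \<pi> [0..<Suc n]"

type_synonym ('ag, 'o) records = "'ag \<Rightarrow> ('o \<times> nat) list"

fun ol :: "('ag, 'o) model \<Rightarrow> ('ag, 'o) records \<Rightarrow> 'ag \<Rightarrow> nat \<Rightarrow> 'o list" where
  "ol M r a 0 = oinit M a # map fst (filter (\<lambda>p. snd p = 0) (r a))"
| "ol M r a (Suc n) = last (ol M r a n) # map fst (filter (\<lambda>p. snd p = Suc n) (r a))"

definition indist :: "('ag, 'o) model \<Rightarrow> ('ag, 'o) records \<Rightarrow> 'ag \<Rightarrow> nat list \<Rightarrow> nat list \<Rightarrow> bool" where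
  "indist M r a h h' \<longleftrightarrow> length h = length h' \<and>
     (\<forall>i<length h. \<forall>ob\<in>set (ol M r a i). (h ! i, h' ! i) \<in> Sim M ob)"

primrec hsat :: "('ag, 'o) model \<Rightarrow> nat list \<Rightarrow> ('ag, 'o) records \<Rightarrow> ('ag, 'o) hform \<Rightarrow> bool"
and psat :: "('ag, 'o) model \<Rightarrow> (nat \<Rightarrow> nat) \<Rightarrow> nat \<Rightarrow> ('ag, 'o) records \<Rightarrow> ('ag, 'o) pform \<Rightarrow> bool"
where
  "hsat M h r (Prop p) = (p \<in> Val M (last h))"
| "hsat M h r (HNot \<phi>) = (\<not> hsat M h r \<phi>)"
| "hsat M h r (HAnd \<phi>1 \<phi>2) = (hsat M h r \<phi>1 \<and> hsat M h r \<phi>2)"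
| "hsat M h r (Aall \<psi>) =
     (\<forall>\<pi>. is_path M \<pi> \<and> (\<forall>i<length h. h ! i = \<pi> i) \<longrightarrow> psat M \<pi> (length h - 1) r \<psi>)"
| "hsat M h r (Know a \<phi>) = (\<forall>h'. is_hist M h' \<and> indist M r a h' h \<longrightarrow> hsat M h' r \<phi>)"
| "hsat M h r (Delta ob a \<phi>) = hsat M h (r(a := r a @ [(ob, length h - 1)])) \<phi>"
| "psat M \<pi> n r (PH \<phi>) = hsat M (pprefix \<pi> n) r \<phi>"
| "psat M \<pi> n r (PNot \<psi>) = (\<not> psat M \<pi> n r \<psi>)"
| "psat M \<pi> n r (PAnd \<psi>1 \<psi>2) = (psat M \<pi> n r \<psi>1 \<and> psat M \<pi> n r \<psi>2)"
| "psat M \<pi> n r (Next \<psi>) = psat M \<pi> (Suc n) r \<psi>"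
| "psat M \<pi> n r (Until \<psi>1 \<psi>2) =
     (\<exists>m'\<ge>n. psat M \<pi> m' r \<psi>2 \<and> (\<forall>j. n \<le> j \<and> j < m' \<longrightarrow> psat M \<pi> j r \<psi>1))"

definition model_sat :: "('ag, 'o) model \<Rightarrow> ('ag, 'o) hform \<Rightarrow> bool" where
  "model_sat M \<phi> \<longleftrightarrow> hsat M [sinit M] (\<lambda>_. []) \<phi>"

(* CTL*K_m fragment: no Delta operator *)
primrec noDelta :: "('ag, 'o) hform \<Rightarrow> bool"
and noDeltaP :: "('ag, 'o) pform \<Rightarrow> bool" where
  "noDelta (Prop p) = True"
| "noDelta (HNot \<phi>) = noDelta \<phi>"
| "noDelta (HAnd \<phi>1 \<phi>2) = (noDelta \<phi>1 \<and> noDelta \<phi>2)"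
| "noDelta (Aall \<psi>) = noDeltaP \<psi>"
| "noDelta (Know a \<phi>) = noDelta \<phi>"
| "noDelta (Delta ob a \<phi>) = False"
| "noDeltaP (PH \<phi>) = noDelta \<phi>"
| "noDeltaP (PNot \<psi>) = noDeltaP \<psi>"
| "noDeltaP (PAnd \<psi>1 \<psi>2) = (noDeltaP \<psi>1 \<and> noDeltaP \<psi>2)"
| "noDeltaP (Next \<psi>) = noDeltaP \<psi>"
| "noDeltaP (Until \<psi>1 \<psi>2) = (noDeltaP \<psi>1 \<and> noDeltaP \<psi>2)"

definition fequiv :: "('ag::finite, 'o::finite) hform \<Rightarrow> ('ag, 'o) hform \<Rightarrow> bool" where
  "fequiv \<phi> \<phi>' \<longleftrightarrow> (\<forall>M :: ('ag, 'o) model. wf_model M \<longrightarrow> (model_sat M \<phi> \<longleftrightarrow> model_sat M \<phi>'))"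

end

theory Submission
  imports Defs
begin

lemma ol_empty: "ol M (\<lambda>_. []) a i = [oinit M a]"
  by (induction i) auto

lemma path_upd[simp]: "is_path (M\<lparr>Sim := S\<rparr>) = is_path M"
  by (auto simp: is_path_def fun_eq_iff)

lemma hist_upd[simp]: "is_hist (M\<lparr>Sim := S\<rparr>) = is_hist M"
  by (auto simp: is_hist_def fun_eq_iff)

lemma indist_upd:
  assumes "\<And>a. S (oinit M a) = Sim M (oinit M a)"
  shows "indist (M\<lparr>Sim := S\<rparr>) (\<lambda>_. []) a = indist M (\<lambda>_. []) a"
proof -
  have "ol (M\<lparr>Sim := S\<rparr>) (\<lambda>_. []) a i = [oinit M a]" for i
    using ol_empty[of "M\<lparr>Sim := S\<rparr>"] by simp
  then show ?thesis using assms by (auto simp: indist_def ol_empty fun_eq_iff)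
qed

lemma inv_sim:
  fixes M :: "('ag,'o) model"
  assumes A: "\<And>a. S (oinit M a) = Sim M (oinit M a)"
  shows "noDelta \<phi> \<Longrightarrow> hsat (M\<lparr>Sim := S\<rparr>) h (\<lambda>_. []) \<phi> = hsat M h (\<lambda>_. []) \<phi>"
    and "noDeltaP \<psi> \<Longrightarrow> psat (M\<lparr>Sim := S\<rparr>) \<pi> n (\<lambda>_. []) \<psi> = psat M \<pi> n (\<lambda>_. []) \<psi>"
proof (induction \<phi> and \<psi> arbitrary: h and \<pi> n)
  case (Know a \<phi>)
  then show ?case using indist_upd[OF A] by simp
qed auto

theorem mainTheorem11:
  assumes "card (UNIV :: 'o::finite set) > 1"
  shows "(\<forall>\<phi> :: ('ag::finite, 'o) hform. noDelta \<phi> \<longrightarrow> (\<exists>\<phi>'. fequiv \<phi> \<phi>')) \<and>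
         (\<exists>\<phi> :: ('ag, 'o) hform. \<forall>\<phi>'. noDelta \<phi>' \<longrightarrow> \<not> fequiv \<phi> \<phi>')"
proof
  show "\<forall>\<phi> :: ('ag::finite, 'o) hform. noDelta \<phi> \<longrightarrow> (\<exists>\<phi>'. fequiv \<phi> \<phi>')"
    by (auto simp: fequiv_def)
next
  obtain o1 o2 :: 'o where ne: "o1 \<noteq> o2"
    using assms card_le_Suc0_iff_eq[of "UNIV :: 'o set"] by force
  define a0 :: 'ag where "a0 = undefined"
  define M1 :: "('ag,'o) model" where "M1 = \<lparr>APf = {0}, St = {0,1}, Tr = {(0,0),(1,1)},
     Val = (\<lambda>s. if s = 1 then {0} else {}), Sim = (\<lambda>_. {0,1} \<times> {0,1}), sinit = 0,
     oinit = (\<lambda>_. o1)\<rparr>"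
  define S2 where "S2 = (\<lambda>ob. if ob = o1 then {0::nat,1} \<times> {0,1} else Id_on {0,1})"
  define M2 where "M2 = M1\<lparr>Sim := S2\<rparr>"
  define \<phi> :: "('ag,'o) hform" where "\<phi> = Delta o2 a0 (Know a0 (HNot (Prop 0)))"
  have wf1: "wf_model M1"
    by (auto simp: wf_model_def M1_def equiv_def refl_on_def sym_def trans_def)
  have wf2: "wf_model M2"
    by (auto simp: wf_model_def M2_def M1_def S2_def equiv_def refl_on_def sym_def trans_def)
  have A: "\<And>a. S2 (oinit M1 a) = Sim M1 (oinit M1 a)"
    by (simp add: S2_def M1_def)
  have n1: "\<not> model_sat M1 \<phi>"
  proof -
    have p: "is_path M1 (\<lambda>_. 1)" by (simp add: is_path_def M1_def)
    have h: "is_hist M1 [1]" unfolding is_hist_def using p by auto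
    have i: "indist M1 ((\<lambda>_. [])(a0 := [(o2, 0)])) a0 [1] [0]"
      by (auto simp: indist_def M1_def)
    have "\<not> hsat M1 [1] ((\<lambda>_. [])(a0 := [(o2, 0)])) (HNot (Prop 0))"
      by (simp add: M1_def)
    then show ?thesis using h i by (auto simp: model_sat_def \<phi>_def M1_def)
  qed
  have y2: "model_sat M2 \<phi>"
  proof -
    have "hsat M2 h' ((\<lambda>_. [])(a0 := [(o2, 0)])) (HNot (Prop 0))"
      if "is_hist M2 h'" "indist M2 ((\<lambda>_. [])(a0 := [(o2, 0)])) a0 h' [0]" for h'
    proof -
      from that(2) have l: "length h' = 1" and s: "(h'!0, 0) \<in> Sim M2 o2"
        by (auto simp: indist_def M2_def M1_def)
      then have "h'!0 = 0" using ne by (auto simp: M2_def S2_def)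
      moreover from l obtain x where "h' = [x]"
        by (metis One_nat_def length_0_conv length_Suc_conv)
      ultimately show ?thesis by (simp add: M2_def M1_def)
    qed
    then show ?thesis by (auto simp: model_sat_def \<phi>_def M2_def M1_def)
  qed
  show "\<exists>\<phi> :: ('ag, 'o) hform. \<forall>\<phi>'. noDelta \<phi>' \<longrightarrow> \<not> fequiv \<phi> \<phi>'"
  proof (intro exI allI impI)
    fix \<phi>' :: "('ag,'o) hform"
    assume nd: "noDelta \<phi>'"
    have "model_sat M2 \<phi>' = model_sat M1 \<phi>'"
      using inv_sim(1)[OF A nd] by (simp add: model_sat_def M2_def)
    then show "\<not> fequiv \<phi> \<phi>'" using n1 y2 wf1 wf2 unfolding fequiv_def by blast
  qed
qed

end
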